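(* Let $\sigma_1,\dots,\sigma_n$ be one-qubit pure states with Bloch vectors $s_1,\dots,s_n\in\mathbb{R}^3$ ($|s_i|=1$). For $a\in(0,1)$ put $\sigma_i(a)=\tfrac12 I+a(\sigma_i-\tfrac12 I)$ (the state with Bloch vector $a s_i$), and define $$A_i(a)=\{\rho\in\mathcal{S}^{\mathrm{faithful}} : D(\rho\|\sigma_i(a))\le D(\rho\|\sigma_j(a))\ \text{for all } j\},\qquad B_i(a)=\{\rho\in\mathcal{S}^{\mathrm{faithful}} : D(\sigma_i(a)\|\rho)\le D(\sigma_j(a)\|\rho)\ \text{for all } j\}.$$ Then for every $i$ the set limits $\lim_{a\to1}A_i(a)$ and $\lim_{a\to 1}B_i(a)$ exist, and the following six subsets of the set $\mathcal{S}^{\mathrm{pure}}$ of one-qubit pure states coincide: (1) $\{\rho\in\mathcal{S}^{\mathrm{pure}}: d_{\mathrm{FS}}(\rho,\sigma_i)\le d_{\mathrm{FS}}(\rho,\sigma_j)\ \forall j\}$; (2) $\{\rho\in\mathcal{S}^{\mathrm{pure}}: d_{\mathrm{B}}(\rho,\sigma_i)\le d_{\mathrm{B}}(\rho,\sigma_j)\ \forall j\}$; (3) the set of pure $\rho$ whose Bloch vector $x$ satisfies $\arccos(x\cdot s_i)\le \arccos(x\cdot s_j)$ for all $j$ (Voronoi region on the unit sphere for the geodesic distance); (4) the set of pure $\rho$ whose Bloch vector $x$ satisfies $|x-s_i|\le |x-s_j|$ for all $j$ (section of the 3-dimensional Euclidean Voronoi diagram with the sphere); (5) $\mathrm{Closure}(\lim_{a\to1}A_i(a))\cap\mathcal{S}^{\mathrm{pure}}$;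 (6) $\mathrm{Closure}(\lim_{a\to1}B_i(a))\cap\mathcal{S}^{\mathrm{pure}}$. That is, the Voronoi diagrams of these sites in the space of pure states with respect to the Fubini–Study distance, the Bures distance, the geodesic distance on the sphere, the Euclidean distance, and the two divergences all coincide.
   Context: A one-qubit state is a $2\times2$ density matrix (Hermitian, trace one, positive semidefinite), parameterized by its Bloch vector $(x,y,z)\in\mathbb{R}^3$, $x^2+y^2+z^2\le 1$, via $\rho=\begin{pmatrix}\frac{1+z}{2}&\frac{x-iy}{2}\\ \frac{x+iy}{2}&\frac{1-z}{2}\end{pmatrix}$. $\mathcal{S}$ is the set of all such states; $\rho$ is pure iff $\mathrm{rank}\,\rho=1$ (iff $|(x,y,z)|=1$), and faithful iff $\mathrm{rank}\,\rho=2$ (iff $|(x,y,z)|<1$); $\mathcal{S}^{\mathrm{pure}},\mathcal{S}^{\mathrm{faithful}}$ denote the corresponding subsets. The quantum divergence is $D(\sigma\|\rho)=\mathrm{Tr}\,\sigma(\log\sigma-\log\rho)$, defined when $\rho$ is faithful, with the convention $0\log0=0$; matrix functions are applied to eigenvalues. For pure $\rho,\sigma$ the Fubini–Study distance $d_{\mathrm{FS}}(\rho,\sigma)\in[0,\pi/2]$ is defined by $\cos d_{\mathrm{FS}}(\rho,\sigma)=\sqrt{\mathrm{Tr}(\rho\sigma)}$. The Bures distance is $d_{\mathrm{B}}(\rho,\sigma)=\sqrt{1-\mathrm{Tr}\sqrt{\sqrt{\sigma}\rho\sqrt{\sigma}}}$. $\mathrm{Closure}$ denotes topological closure in $\mathcal{S}$.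 *)

theory Defs
  imports "HOL-Analysis.Analysis"
begin

type_synonym cmat = "complex^2^2"

definition bloch :: "real^3 \<Rightarrow> cmat" where
  "bloch x = (\<chi> i j.
      if i = 1 \<and> j = 1 then (1 + complex_of_real (x$3)) / 2
      else if i = 1 \<and> j = 2 then (complex_of_real (x$1) - \<i> * complex_of_real (x$2)) / 2
      else if i = 2 \<and> j = 1 then (complex_of_real (x$1) + \<i> * complex_of_real (x$2)) / 2
      else (1 - complex_of_real (x$3)) / 2)"

definition states :: "cmat set" where "states = bloch ` cball 0 1"
definition pure_states :: "cmat set" where "pure_states = bloch ` sphere 0 1"
definition faithful_states :: "cmat set" where "faithful_states = bloch ` ball 0 1"

text \<open>Matrix function of a Hermitian 2x2 matrix: f applied to the eigenvalues
  lp, lm (roots of the characteristic polynomial) via the spectral projectors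
  (M - lm I)/(lp - lm) and (lp I - M)/(lp - lm).\<close>
definition mfun :: "(real \<Rightarrow> real) \<Rightarrow> cmat \<Rightarrow> cmat" where
  "mfun f M = (let tr = Re (trace M); dt = Re (det M);
                   r = sqrt (tr\<^sup>2 / 4 - dt); lp = tr / 2 + r; lm = tr / 2 - r
               in if r = 0 then f (tr / 2) *\<^sub>R mat 1
                  else (f lp / (lp - lm)) *\<^sub>R (M - lm *\<^sub>R mat 1)
                     + (f lm / (lp - lm)) *\<^sub>R (lp *\<^sub>R mat 1 - M))"

text \<open>Quantum divergence D(sigma||rho) = Tr sigma (log sigma - log rho), with 0 log 0 = 0:
  the term sigma log sigma is the matrix function x log x of sigma.\<close>
definition qdiv :: "cmat \<Rightarrow> cmat \<Rightarrow> real" where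
  "qdiv \<sigma> \<rho> = Re (trace (mfun (\<lambda>x. x * ln x) \<sigma>) - trace (\<sigma> ** mfun ln \<rho>))"

definition d_FS :: "cmat \<Rightarrow> cmat \<Rightarrow> real" where
  "d_FS \<rho> \<sigma> = arccos (sqrt (Re (trace (\<rho> ** \<sigma>))))"

definition d_B :: "cmat \<Rightarrow> cmat \<Rightarrow> real" where
  "d_B \<rho> \<sigma> = sqrt (1 - Re (trace (mfun sqrt (mfun sqrt \<sigma> ** \<rho> ** mfun sqrt \<sigma>))))"

definition set_liminf :: "'b filter \<Rightarrow> ('b \<Rightarrow> 'a set) \<Rightarrow> 'a set" where
  "set_liminf F X = {x. eventually (\<lambda>a. x \<in> X a) F}"
definition set_limsup :: "'b filter \<Rightarrow> ('b \<Rightarrow> 'a set) \<Rightarrow> 'a set" where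
  "set_limsup F X = {x. frequently (\<lambda>a. x \<in> X a) F}"
definition set_lim_exists :: "'b filter \<Rightarrow> ('b \<Rightarrow> 'a set) \<Rightarrow> bool" where
  "set_lim_exists F X \<longleftrightarrow> set_liminf F X = set_limsup F X"
definition set_lim :: "'b filter \<Rightarrow> ('b \<Rightarrow> 'a set) \<Rightarrow> 'a set" where
  "set_lim F X = set_liminf F X"

definition shrink :: "real \<Rightarrow> cmat \<Rightarrow> cmat" where
  "shrink a \<sigma> = (1/2) *\<^sub>R mat 1 + a *\<^sub>R (\<sigma> - (1/2) *\<^sub>R mat 1)"

end

theory Submission imports Defs begin


lemma bloch_nth: "bloch x $ 1 $ 1 = (1 + complex_of_real (x$3)) / 2"
  "bloch x $ 1 $ 2 = (complex_of_real (x$1) - \<i> * complex_of_real (x$2)) / 2"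
  "bloch x $ 2 $ 1 = (complex_of_real (x$1) + \<i> * complex_of_real (x$2)) / 2"
  "bloch x $ 2 $ 2 = (1 - complex_of_real (x$3)) / 2"
  by (simp_all add: bloch_def)

lemma norm3: "(norm (x::real^3))^2 = (x$1)^2 + (x$2)^2 + (x$3)^2"
  by (simp add: norm_vec_def L2_set_def sum_3 real_norm_def)

lemma inner3: "(x::real^3) \<bullet> y = x$1*y$1 + x$2*y$2 + x$3*y$3"
  by (simp add: inner_vec_def sum_3)

lemma tr_bloch: "trace (bloch x) = 1"
  by (simp add: trace_def sum_2 bloch_nth field_simps)

lemma det_bloch: "Re (det (bloch x)) = (1 - (norm x)^2)/4"
  using norm3[of x] by (simp add: det_2 bloch_nth field_simps power2_eq_square)

lemma key: "Re (trace (bloch y ** (\<alpha> *\<^sub>R (bloch x - \<beta> *\<^sub>R mat 1) + \<gamma> *\<^sub>R (\<delta> *\<^sub>R mat 1 - bloch x))))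
   = \<alpha>*((1 + x\<bullet>y)/2 - \<beta>) + \<gamma>*(\<delta> - (1 + x\<bullet>y)/2)"
  by (simp add: trace_def matrix_matrix_mult_def sum_2 bloch_nth mat_def inner3 field_simps)

lemma key2: "Re (trace (bloch y ** (c *\<^sub>R mat 1))) = c"
  by (simp add: trace_def matrix_matrix_mult_def sum_2 bloch_nth mat_def field_simps)

lemma key3: "Re (trace (bloch y ** bloch x)) = (1 + x \<bullet> y)/2"
  by (simp add: trace_def matrix_matrix_mult_def sum_2 bloch_nth mat_def inner3 field_simps)

lemma shrink_bloch: "shrink a (bloch s) = bloch (a *\<^sub>R s)"
  by (simp add: shrink_def bloch_def vec_eq_iff forall_2 mat_def complex_eq_iff field_simps)

lemma bloch_inj: "bloch x = bloch y \<Longrightarrow> x = y"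
  apply (simp add: vec_eq_iff bloch_def forall_2 forall_3 complex_eq_iff)
  done

lemma sqrt_r: "sqrt ((Re (trace (bloch x)))\<^sup>2 / 4 - Re (det (bloch x))) = norm x / 2"
proof -
  have "(Re (trace (bloch x)))\<^sup>2 / 4 - Re (det (bloch x)) = (norm x / 2)^2"
    by (simp add: tr_bloch det_bloch field_simps power2_eq_square)
  then show ?thesis by simp
qed

lemma mfun_bloch: "mfun f (bloch x) = (if x = 0 then f (1/2) *\<^sub>R mat 1 else
   (f ((1 + norm x)/2) / norm x) *\<^sub>R (bloch x - ((1 - norm x)/2) *\<^sub>R mat 1)
   + (f ((1 - norm x)/2) / norm x) *\<^sub>R (((1 + norm x)/2) *\<^sub>R mat 1 - bloch x))"
  unfolding mfun_def Let_def sqrt_r by (simp add: tr_bloch add_divide_distrib diff_divide_distrib)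

lemma tr_mfun_bloch: "Re (trace (bloch y ** mfun f (bloch x))) = (if x = 0 then f (1/2) else
   (f ((1 + norm x)/2) + f ((1 - norm x)/2))/2
   + (f ((1 + norm x)/2) - f ((1 - norm x)/2)) * (x \<bullet> y) / (2 * norm x))"
proof (cases "x = 0")
  case True then show ?thesis by (simp add: mfun_bloch key2)
next
  case False
  then have "norm x > 0" by simp
  have "Re (trace (bloch y ** mfun f (bloch x))) = (f ((1 + norm x)/2) / norm x) * ((1 + x\<bullet>y)/2 - (1 - norm x)/2)
     + (f ((1 - norm x)/2) / norm x) * ((1 + norm x)/2 - (1 + x\<bullet>y)/2)"
    by (simp only: mfun_bloch if_not_P[OF False] key)
  moreover have "(f ((1 + norm x)/2) / norm x) * ((1 + x\<bullet>y)/2 - (1 - norm x)/2)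
     + (f ((1 - norm x)/2) / norm x) * ((1 + norm x)/2 - (1 + x\<bullet>y)/2) =
     (f ((1 + norm x)/2) + f ((1 - norm x)/2))/2
   + (f ((1 + norm x)/2) - f ((1 - norm x)/2)) * (x \<bullet> y) / (2 * norm x)"
    using \<open>norm x > 0\<close> by (simp add: field_simps)
  ultimately show ?thesis using False by simp
qed

lemma tr_half: "trace (bloch 0 ** M) = trace M / 2"
  by (simp add: trace_def matrix_matrix_mult_def sum_2 bloch_nth field_simps)

lemma tr_mfun: "Re (trace (mfun f (bloch x))) = (if x = 0 then 2 * f (1/2) else
   f ((1 + norm x)/2) + f ((1 - norm x)/2))"
proof -
  have "Re (trace (mfun f (bloch x))) = 2 * Re (trace (bloch 0 ** mfun f (bloch x)))"
    by (simp add: tr_half)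
  then show ?thesis unfolding tr_mfun_bloch by simp
qed

lemma idem: "norm s = 1 \<Longrightarrow> bloch s ** bloch s = bloch s"
  using norm3[of s]
  by (simp add: vec_eq_iff forall_2 matrix_matrix_mult_def sum_2 bloch_nth complex_eq_iff field_simps power2_eq_square)

lemma det_pure: "norm s = 1 \<Longrightarrow> det (bloch s) = 0"
  using norm3[of s]
  by (simp add: det_2 bloch_nth complex_eq_iff field_simps power2_eq_square)

lemma mfun_sqrt_pure: "norm s = 1 \<Longrightarrow> mfun sqrt (bloch s) = bloch s"
  by (auto simp: mfun_bloch)

lemma tr_scaleR: "trace (c *\<^sub>R (M::cmat)) = c *\<^sub>R trace M"
  by (simp add: trace_def sum_2 algebra_simps)

lemma dB_aux: assumes "norm s = 1" "norm x \<le> 1"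
  shows "Re (trace (mfun sqrt (mfun sqrt (bloch s) ** bloch x ** mfun sqrt (bloch s)))) = sqrt ((1 + x \<bullet> s)/2)"
proof -
  define M where "M = bloch s ** bloch x ** bloch s"
  define t where "t = (1 + x \<bullet> s)/2"
  have "\<bar>x \<bullet> s\<bar> \<le> 1" using Cauchy_Schwarz_ineq2[of x s] assms
    by (smt (verit) mult_le_one norm_ge_zero)
  then have t0: "t \<ge> 0" by (simp add: t_def)
  have "trace M = trace (bloch s ** (bloch s ** bloch x))"
    unfolding M_def by (metis trace_mul_sym)
  also have "\<dots> = trace (bloch s ** bloch x)" by (simp add: matrix_mul_assoc idem assms)
  finally have trM: "Re (trace M) = t" by (simp add: key3 t_def inner_commute)
  have dM: "Re (det M) = 0" unfolding M_def by (simp add: det_mul det_pure assms)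
  have r: "sqrt (t\<^sup>2 / 4 - 0) = t / 2"
    using t0 by (simp add: real_sqrt_divide)
  have "Re (trace (mfun sqrt M)) = sqrt t"
  proof (cases "t = 0")
    case True then show ?thesis unfolding mfun_def Let_def r trM dM by (simp add: tr_scaleR trace_def)
  next
    case False
    then show ?thesis unfolding mfun_def Let_def r trM dM using t0
      by (simp add: tr_scaleR trM real_sqrt_mult_self[symmetric])
  qed
  then show ?thesis using assms by (simp add: mfun_sqrt_pure M_def t_def)
qed

lemma cs1: "norm x \<le> 1 \<Longrightarrow> norm s = 1 \<Longrightarrow> \<bar>x \<bullet> (s::real^3)\<bar> \<le> 1"
  using Cauchy_Schwarz_ineq2[of x s] by (smt (verit) mult_le_one norm_ge_zero)

lemma fs_eq: "d_FS (bloch x) (bloch s) = arccos (sqrt ((1 + x \<bullet> s)/2))"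
  by (simp add: d_FS_def key3 inner_commute)

lemma fs_cmp: "\<bar>u\<bar> \<le> 1 \<Longrightarrow> \<bar>v\<bar> \<le> 1 \<Longrightarrow>
   arccos (sqrt ((1+u)/2)) \<le> arccos (sqrt ((1+v)/2)) \<longleftrightarrow> v \<le> (u::real)"
  by (subst arccos_le_mono) auto

lemma dB_eq: "norm s = 1 \<Longrightarrow> norm x \<le> 1 \<Longrightarrow> d_B (bloch x) (bloch s) = sqrt (1 - sqrt ((1 + x \<bullet> s)/2))"
  unfolding d_B_def by (simp add: dB_aux)

lemma dB_cmp: "\<bar>u\<bar> \<le> 1 \<Longrightarrow> \<bar>v\<bar> \<le> 1 \<Longrightarrow>
   sqrt (1 - sqrt ((1+u)/2)) \<le> sqrt (1 - sqrt ((1+v)/2)) \<longleftrightarrow> v \<le> (u::real)"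
  by auto

lemma dist2: "norm x = 1 \<Longrightarrow> norm s = 1 \<Longrightarrow> (dist x s)^2 = 2 - 2 * (x \<bullet> (s::real^3))"
  by (simp add: dist_norm power2_norm_eq_inner inner_diff_left inner_diff_right inner_commute norm_eq_1)

lemma dist_cmp: "norm x = 1 \<Longrightarrow> norm s = 1 \<Longrightarrow> norm s' = 1 \<Longrightarrow>
   dist x s \<le> dist x s' \<longleftrightarrow> x \<bullet> s' \<le> x \<bullet> (s::real^3)"
proof -
  assume a: "norm x = 1" "norm s = 1" "norm s' = 1"
  have "dist x s \<le> dist x s' \<longleftrightarrow> (dist x s)^2 \<le> (dist x s')^2"
    by (simp add: power_mono_iff)
  then show ?thesis using dist2[OF a(1,2)] dist2[OF a(1,3)] by simp
qed

lemma qA: assumes "0 < a" "a < 1" "norm s = 1"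
  shows "qdiv (bloch x) (shrink a (bloch s)) = Re (trace (mfun (\<lambda>x. x * ln x) (bloch x)))
     - (ln ((1+a)/2) + ln ((1-a)/2))/2 - (ln ((1+a)/2) - ln ((1-a)/2)) * (x \<bullet> s) / 2"
proof -
  have n: "norm (a *\<^sub>R s) = a" "a *\<^sub>R s \<noteq> 0" using assms by auto
  show ?thesis unfolding qdiv_def shrink_bloch minus_complex.sel(1) tr_mfun_bloch using n assms
    by (simp add: field_simps inner_commute)
qed

lemma qB: assumes "0 < a" "a < 1" "norm s = 1"
  shows "qdiv (bloch (a *\<^sub>R s)) (bloch x) = (((1+a)/2) * ln ((1+a)/2) + ((1-a)/2) * ln ((1-a)/2))
     - (if x = 0 then ln (1/2) else (ln ((1 + norm x)/2) + ln ((1 - norm x)/2))/2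
        + (ln ((1 + norm x)/2) - ln ((1 - norm x)/2)) * a * (x \<bullet> s) / (2 * norm x))"
proof -
  have n: "norm (a *\<^sub>R s) = a" "a *\<^sub>R s \<noteq> 0" using assms by auto
  show ?thesis unfolding qdiv_def minus_complex.sel(1) tr_mfun_bloch tr_mfun using n assms
    by (simp add: field_simps)
qed

lemma cmpA: assumes "0 < a" "a < 1" "norm s = 1" "norm s' = 1"
  shows "qdiv (bloch x) (shrink a (bloch s)) \<le> qdiv (bloch x) (shrink a (bloch s'))
     \<longleftrightarrow> x \<bullet> s' \<le> x \<bullet> s"
proof -
  have "ln ((1-a)/2) < ln ((1+a)/2)" using assms by simp
  then have c: "ln ((1+a)/2) - ln ((1-a)/2) > 0" by simp
  show ?thesis unfolding qA[OF assms(1,2,3)] qA[OF assms(1,2,4)]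
    using c by (simp add: divide_le_cancel mult_le_cancel_left_pos)
qed

lemma cmpB: assumes "0 < a" "a < 1" "norm s = 1" "norm s' = 1" "norm x < 1"
  shows "qdiv (bloch (a *\<^sub>R s)) (bloch x) \<le> qdiv (bloch (a *\<^sub>R s')) (bloch x)
     \<longleftrightarrow> x \<bullet> s' \<le> x \<bullet> s"
proof (cases "x = 0")
  case True then show ?thesis unfolding qB[OF assms(1,2,3)] qB[OF assms(1,2,4)] by simp
next
  case False
  then have nx: "norm x > 0" by simp
  have "ln ((1 - norm x)/2) < ln ((1 + norm x)/2)"
    using nx assms by (subst ln_less_cancel_iff) (simp_all add: add_pos_pos)
  then have c: "(ln ((1 + norm x)/2) - ln ((1 - norm x)/2)) * a / (2 * norm x) > 0"
    using assms nx by (intro divide_pos_pos mult_pos_pos) (auto simp: \<open>ln ((1 - norm x)/2) < ln ((1 + norm x)/2)\<close>)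
  define C where "C = (ln ((1 + norm x)/2) - ln ((1 - norm x)/2)) * a / (2 * norm x)"
  have e: "\<And>t. (ln ((1 + norm x)/2) - ln ((1 - norm x)/2)) * a * t / (2 * norm x) = C * t"
    by (simp add: C_def)
  show ?thesis unfolding qB[OF assms(1,2,3)] qB[OF assms(1,2,4)] if_not_P[OF False] e
    using c unfolding C_def[symmetric] by (simp add: mult_le_cancel_left_pos)
qed


lemma bloch_lin: "bloch x = bloch 0 + (x$1) *\<^sub>R (bloch (axis 1 1) - bloch 0)
   + (x$2) *\<^sub>R (bloch (axis 2 1) - bloch 0) + (x$3) *\<^sub>R (bloch (axis 3 1) - bloch 0)"
  apply (simp add: vec_eq_iff forall_2 bloch_nth axis_def)
  apply (simp add: complex_eq_iff)
  done

lemma bloch_cont: "continuous_on UNIV bloch"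
proof -
  have "continuous_on UNIV (\<lambda>x::real^3. bloch 0 + (x$1) *\<^sub>R (bloch (axis 1 1) - bloch 0)
   + (x$2) *\<^sub>R (bloch (axis 2 1) - bloch 0) + (x$3) *\<^sub>R (bloch (axis 3 1) - bloch 0))"
    by (intro continuous_on_add continuous_on_const continuous_on_scaleR continuous_on_component continuous_on_id)
  then show ?thesis by (simp only: bloch_lin[symmetric])
qed

lemma setlim_const: assumes ev: "eventually (\<lambda>a. X a = Y) F" and F: "F \<noteq> bot"
  shows "set_liminf F X = Y \<and> set_limsup F X = Y"
proof -
  have 1: "eventually (\<lambda>a. x \<in> X a) F \<longleftrightarrow> x \<in> Y" for x
  proof
    assume h: "eventually (\<lambda>a. x \<in> X a) F"
    have "eventually (\<lambda>a. X a = Y \<and> x \<in> X a) F" using ev h by (rule eventually_conj)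
    then have "eventually (\<lambda>a. x \<in> Y) F" by (rule eventually_mono) auto
    then show "x \<in> Y" using F by (simp add: eventually_const_iff)
  next
    assume "x \<in> Y" then show "eventually (\<lambda>a. x \<in> X a) F" using ev by (auto elim: eventually_mono)
  qed
  have 2: "frequently (\<lambda>a. x \<in> X a) F \<longleftrightarrow> x \<in> Y" for x
  proof
    assume h: "frequently (\<lambda>a. x \<in> X a) F"
    have "frequently (\<lambda>a. x \<in> Y) F"
      by (rule frequently_mp[OF _ h], rule eventually_mono[OF ev]) auto
    then show "x \<in> Y" using F by simp
  next
    assume "x \<in> Y" then show "frequently (\<lambda>a. x \<in> X a) F"
      using 1 F eventually_frequently by blast
  qed
  show ?thesis using 1 2 unfolding set_liminf_def set_limsup_def by auto
qed

lemma img_filter: "{\<rho> \<in> bloch ` S. Q \<rho>} = bloch ` {x\<in>S. Q (bloch x)}" by auto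

lemma clos: assumes K: "closed K" and cone: "\<And>x t. x \<in> K \<Longrightarrow> t \<ge> 0 \<Longrightarrow> t *\<^sub>R x \<in> K"
  shows "closure (bloch ` (ball 0 1 \<inter> K)) \<inter> pure_states = bloch ` (sphere 0 1 \<inter> K)"
proof
  have cl: "closed (bloch ` (cball 0 1 \<inter> K))"
    by (intro compact_imp_closed compact_continuous_image continuous_on_subset[OF bloch_cont]
        compact_Int_closed compact_cball K) auto
  have "closure (bloch ` (ball 0 1 \<inter> K)) \<subseteq> bloch ` (cball 0 1 \<inter> K)"
    by (rule closure_minimal[OF _ cl]) auto
  then show "closure (bloch ` (ball 0 1 \<inter> K)) \<inter> pure_states \<subseteq> bloch ` (sphere 0 1 \<inter> K)"
    unfolding pure_states_def using bloch_inj by fastforce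
next
  show "bloch ` (sphere 0 1 \<inter> K) \<subseteq> closure (bloch ` (ball 0 1 \<inter> K)) \<inter> pure_states"
  proof
    fix \<rho> assume "\<rho> \<in> bloch ` (sphere 0 1 \<inter> K)"
    then obtain x where x: "norm x = 1" "x \<in> K" and r: "\<rho> = bloch x" by auto
    define t where "t = (\<lambda>m. 1 + - inverse (real (Suc m)))"
    have t: "0 \<le> t m" "t m < 1" for m
      unfolding t_def by (auto simp: field_simps)
    have mem: "bloch (t m *\<^sub>R x) \<in> bloch ` (ball 0 1 \<inter> K)" for m
      using t[of m] x cone[of x "t m"] by auto
    have "(\<lambda>m. t m *\<^sub>R x) \<longlonglongrightarrow> 1 *\<^sub>R x"
      unfolding t_def by (intro tendsto_scaleR LIMSEQ_inverse_real_of_nat_add_minus tendsto_const)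
    then have "(\<lambda>m. bloch (t m *\<^sub>R x)) \<longlonglongrightarrow> bloch x"
      using continuous_on_tendsto_compose[OF bloch_cont] by auto
    then have "\<rho> \<in> closure (bloch ` (ball 0 1 \<inter> K))"
      unfolding r closure_sequential using mem by (intro exI[of _ "\<lambda>m. bloch (t m *\<^sub>R x)"]) auto
    moreover have "\<rho> \<in> pure_states" using x r by (auto simp: pure_states_def)
    ultimately show "\<rho> \<in> closure (bloch ` (ball 0 1 \<inter> K)) \<inter> pure_states" by blast
  qed
qed
theorem mainTheorem1:
  fixes n :: nat and s :: "nat \<Rightarrow> real^3" and i :: nat
  assumes sites: "\<forall>j<n. norm (s j) = 1"
    and i: "i < n"
  defines "\<sigma> \<equiv> \<lambda>j. bloch (s j)"
  defines "A \<equiv> \<lambda>k (a::real). {\<rho> \<in> faithful_states.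
              \<forall>j<n. qdiv \<rho> (shrink a (\<sigma> k)) \<le> qdiv \<rho> (shrink a (\<sigma> j))}"
  defines "B \<equiv> \<lambda>k (a::real). {\<rho> \<in> faithful_states.
              \<forall>j<n. qdiv (shrink a (\<sigma> k)) \<rho> \<le> qdiv (shrink a (\<sigma> j)) \<rho>}"
  defines "V1 \<equiv> {\<rho> \<in> pure_states. \<forall>j<n. d_FS \<rho> (\<sigma> i) \<le> d_FS \<rho> (\<sigma> j)}"
  defines "V2 \<equiv> {\<rho> \<in> pure_states. \<forall>j<n. d_B \<rho> (\<sigma> i) \<le> d_B \<rho> (\<sigma> j)}"
  defines "V3 \<equiv> bloch ` {x. norm x = 1 \<and> (\<forall>j<n. arccos (x \<bullet> s i) \<le> arccos (x \<bullet> s j))}"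
  defines "V4 \<equiv> bloch ` {x. norm x = 1 \<and> (\<forall>j<n. dist x (s i) \<le> dist x (s j))}"
  defines "V5 \<equiv> closure (set_lim (at_left 1) (A i)) \<inter> pure_states"
  defines "V6 \<equiv> closure (set_lim (at_left 1) (B i)) \<inter> pure_states"
  shows "(\<forall>k<n. set_lim_exists (at_left 1) (A k) \<and> set_lim_exists (at_left 1) (B k))
         \<and> V1 = V2 \<and> V2 = V3 \<and> V3 = V4 \<and> V4 = V5 \<and> V5 = V6"
  proof -
  define K where "K = (\<lambda>k. {x::real^3. \<forall>j<n. x \<bullet> s j \<le> x \<bullet> s k})"
  have Kc: "closed (K k)" for k
  proof -
    have "K k = (\<Inter>j\<in>{..<n}. {x. inner (s j - s k) x \<le> 0})"
      unfolding K_def by (auto simp: inner_diff_left inner_diff_right inner_commute)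
    then show ?thesis by (auto intro!: closed_INT closed_halfspace_le)
  qed
  have Kcone: "t *\<^sub>R x \<in> K k" if "x \<in> K k" "t \<ge> 0" for x t k
    using that unfolding K_def by (auto intro: mult_left_mono)
  have cs: "\<bar>x \<bullet> s j\<bar> \<le> 1" if "norm x \<le> 1" "j < n" for x j
    using cs1 sites that by auto
  define G where "G = (\<lambda>k. bloch ` (ball 0 1 \<inter> K k))"
  have AG: "A k a = G k" if "k < n" "0 < a" "a < 1" for k a
  proof -
    have "A k a = bloch ` {x \<in> ball 0 1. \<forall>j<n. qdiv (bloch x) (shrink a (bloch (s k)))
         \<le> qdiv (bloch x) (shrink a (bloch (s j)))}"
      unfolding A_def \<sigma>_def faithful_states_def img_filter by simp
    also have "\<dots> = G k" unfolding G_def K_def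
      using cmpA[OF that(2,3)] sites that(1) by (intro image_cong) auto
    finally show ?thesis .
  qed
  have BG: "B k a = G k" if "k < n" "0 < a" "a < 1" for k a
  proof -
    have "B k a = bloch ` {x \<in> ball 0 1. \<forall>j<n. qdiv (bloch (a *\<^sub>R s k)) (bloch x)
         \<le> qdiv (bloch (a *\<^sub>R s j)) (bloch x)}"
      unfolding B_def \<sigma>_def faithful_states_def img_filter shrink_bloch by simp
    also have "\<dots> = G k" unfolding G_def K_def
      using cmpB[OF that(2,3)] sites that(1) by (intro image_cong) auto
    finally show ?thesis .
  qed
  have evA: "eventually (\<lambda>a. A k a = G k) (at_left (1::real))"
       and evB: "eventually (\<lambda>a. B k a = G k) (at_left (1::real))" if "k < n" for k
    using AG[OF that] BG[OF that]
    by (auto intro: eventually_mono[OF eventually_at_left_real[of 0 1]])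
  have LA: "set_liminf (at_left 1) (A k) = G k \<and> set_limsup (at_left 1) (A k) = G k"
   and LB: "set_liminf (at_left 1) (B k) = G k \<and> set_limsup (at_left 1) (B k) = G k"
    if "k < n" for k
    using setlim_const[OF evA[OF that]] setlim_const[OF evB[OF that]] by auto
  define W where "W = bloch ` (sphere 0 1 \<inter> K i)"
  have "V5 = W" unfolding V5_def W_def set_lim_def using LA[OF i] clos[OF Kc Kcone] G_def by simp
  moreover have "V6 = W" unfolding V6_def W_def set_lim_def using LB[OF i] clos[OF Kc Kcone] G_def by simp
  moreover have "V4 = W" unfolding V4_def W_def K_def
    using dist_cmp sites i by (intro image_cong) auto
  moreover have "V3 = W" unfolding V3_def W_def K_def
    using arccos_le_mono cs i by (intro image_cong) auto
  moreover have "V1 = W" unfolding V1_def W_def K_def pure_states_def img_filter \<sigma>_def fs_eq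
    using fs_cmp cs i by (intro image_cong) auto
  moreover have "V2 = W" unfolding V2_def W_def K_def pure_states_def img_filter \<sigma>_def
    using dB_eq dB_cmp cs i sites by (intro image_cong) auto
  ultimately show ?thesis using LA LB unfolding set_lim_exists_def by auto
qed
end
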